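(* There exists a CF program $\mathtt{p}$ that terminates on every input $x\in\{0,1\}^*$ and whose native running time $\mathit{time}_{\mathtt{p}}(x)$ is exponential in $|x|$ (in particular, not bounded by any polynomial in $|x|$).
   Context: CF ("cons-free") is a first-order, call-by-value functional language over booleans and bit lists $\{0,1\}^*$. A program is a finite sequence of mutually recursive function definitions $\mathtt{f\ x1 \dots xm = e}$ ($m\ge0$), the first being a one-argument entry function. Expressions are $\mathtt{True}$, $\mathtt{False}$, $\mathtt{[]}$, variables, base calls $\mathtt{not\ e}$, $\mathtt{null\ e}$, $\mathtt{head\ e}$, $\mathtt{tail\ e}$, conditionals $\mathtt{if\ e_0\ then\ e_1\ else\ e_2}$, and calls $\mathtt{f\ e_1\dots e_m}$ of defined functions; there are no list constructors. Semantics is standard big-step call-by-value evaluation given by inference rules deriving $\mathtt{p},\rho\vdash\mathtt{e}\to v$ (a call evaluates all arguments, then the body in the new environment; a conditional evaluates its test, then only the selected branch). The derivation tree for the run on input $x$ is the computation tree $\mathcal{T}^{\mathtt{p},x}$, and the native running time $\mathit{time}_{\mathtt{p}}(x)$ is the number of nodes of $\mathcal{T}^{\mathtt{p},x}$. *)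

theory Defs
  imports Complex_Main
begin

(* Values of CF: booleans and bit lists (bits represented as booleans). *)
datatype val = VB bool | VL "bool list"

(* Expressions. Variables are de Bruijn-style indices into the argument list
   of the enclosing function; defined functions are indices into the program. *)
datatype expr =
    ETrue | EFalse | ENil
  | Var nat
  | ENot expr | ENull expr | EHead expr | ETail expr
  | EIf expr expr expr
  | ECall nat "expr list"

(* A program: list of definitions (arity m, body); entry function is index 0. *)
type_synonym prog = "(nat \<times> expr) list"

fun wf_expr :: "prog \<Rightarrow> nat \<Rightarrow> expr \<Rightarrow> bool" where
  "wf_expr p m ETrue = True"
| "wf_expr p m EFalse = True"
| "wf_expr p m ENil = True"
| "wf_expr p m (Var i) = (i < m)"
| "wf_expr p m (ENot e) = wf_expr p m e"
| "wf_expr p m (ENull e) = wf_expr p m e"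
| "wf_expr p m (EHead e) = wf_expr p m e"
| "wf_expr p m (ETail e) = wf_expr p m e"
| "wf_expr p m (EIf e0 e1 e2) = (wf_expr p m e0 \<and> wf_expr p m e1 \<and> wf_expr p m e2)"
| "wf_expr p m (ECall f es) =
     (f < length p \<and> fst (p ! f) = length es \<and> (\<forall>e\<in>set es. wf_expr p m e))"

definition wf_prog :: "prog \<Rightarrow> bool" where
  "wf_prog p \<longleftrightarrow> p \<noteq> [] \<and> fst (p ! 0) = 1 \<and>
     (\<forall>d\<in>set p. wf_expr p (fst d) (snd d))"

(* Big-step call-by-value semantics; the last argument counts the number of
   nodes of the derivation (computation) tree. evals handles argument lists
   (its count is the total number of nodes of the argument subderivations). *)
inductive eval :: "prog \<Rightarrow> val list \<Rightarrow> expr \<Rightarrow> val \<Rightarrow> nat \<Rightarrow> bool"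
  and evals :: "prog \<Rightarrow> val list \<Rightarrow> expr list \<Rightarrow> val list \<Rightarrow> nat \<Rightarrow> bool"
  for p :: prog where
  ev_true: "eval p \<rho> ETrue (VB True) 1"
| ev_false: "eval p \<rho> EFalse (VB False) 1"
| ev_nil: "eval p \<rho> ENil (VL []) 1"
| ev_var: "i < length \<rho> \<Longrightarrow> eval p \<rho> (Var i) (\<rho> ! i) 1"
| ev_not: "eval p \<rho> e (VB b) n \<Longrightarrow> eval p \<rho> (ENot e) (VB (\<not> b)) (Suc n)"
| ev_null: "eval p \<rho> e (VL xs) n \<Longrightarrow> eval p \<rho> (ENull e) (VB (xs = [])) (Suc n)"
| ev_head: "eval p \<rho> e (VL (a # xs)) n \<Longrightarrow> eval p \<rho> (EHead e) (VB a) (Suc n)"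
| ev_tail: "eval p \<rho> e (VL (a # xs)) n \<Longrightarrow> eval p \<rho> (ETail e) (VL xs) (Suc n)"
| ev_if_true: "eval p \<rho> e0 (VB True) n0 \<Longrightarrow> eval p \<rho> e1 v n1 \<Longrightarrow>
     eval p \<rho> (EIf e0 e1 e2) v (Suc (n0 + n1))"
| ev_if_false: "eval p \<rho> e0 (VB False) n0 \<Longrightarrow> eval p \<rho> e2 v n2 \<Longrightarrow>
     eval p \<rho> (EIf e0 e1 e2) v (Suc (n0 + n2))"
| ev_call: "f < length p \<Longrightarrow> fst (p ! f) = length es \<Longrightarrow>
     evals p \<rho> es vs n \<Longrightarrow> eval p vs (snd (p ! f)) v m \<Longrightarrow>
     eval p \<rho> (ECall f es) v (Suc (n + m))"
| evs_nil: "evals p \<rho> [] [] 0"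
| evs_cons: "eval p \<rho> e v n \<Longrightarrow> evals p \<rho> es vs m \<Longrightarrow>
     evals p \<rho> (e # es) (v # vs) (n + m)"

definition terminates :: "prog \<Rightarrow> bool list \<Rightarrow> bool" where
  "terminates p x \<longleftrightarrow> (\<exists>v n. eval p [VL x] (snd (p ! 0)) v n)"

definition time :: "prog \<Rightarrow> bool list \<Rightarrow> nat" where
  "time p x = (THE n. \<exists>v. eval p [VL x] (snd (p ! 0)) v n)"

end

theory Submission
  imports Defs "HOL-Real_Asymp.Real_Asymp"
begin

definition body :: expr where
  "body = EIf (ENull (Var 0)) ETrue
     (EIf (ECall 0 [ETail (Var 0)]) (ECall 0 [ETail (Var 0)]) EFalse)"

definition P :: prog where "P = [(1, body)]"

definition T :: "nat \<Rightarrow> nat" where "T n = 14 * 2 ^ n - 10"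

lemma T0: "T 0 = 4" by (simp add: T_def)
lemma TS: "T (Suc n) = 10 + 2 * T n"
proof -
  have "(2::nat) ^ n \<ge> 1" by simp
  moreover have "T (Suc n) = 14 * (2 * 2 ^ n) - 10" by (simp add: T_def)
  ultimately show ?thesis unfolding T_def by arith
qed

inductive_cases evIf: "eval p r (EIf a b c) v n"
inductive_cases evNull: "eval p r (ENull a) v n"
inductive_cases evTail: "eval p r (ETail a) v n"
inductive_cases evVar: "eval p r (Var i) v n"
inductive_cases evTrue: "eval p r ETrue v n"
inductive_cases evFalse: "eval p r EFalse v n"
inductive_cases evCall: "eval p r (ECall f es) v n"
inductive_cases evsCons: "evals p r (e # es) vs n"
inductive_cases evsNil: "evals p r [] vs n"

lemma call_inv:
  assumes "eval P [VL x] (ECall 0 [ETail (Var 0)]) v n"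
  shows "\<exists>a xs m. x = a # xs \<and> eval P [VL xs] body v m \<and> n = 3 + m"
  using assms
  apply (elim evCall evsCons evsNil evTail evVar)
  apply (auto simp: P_def)
  done

lemma det: "eval P [VL x] body v n \<Longrightarrow> v = VB True \<and> n = T (length x)"
proof (induction x arbitrary: v n)
  case Nil
  then show ?case
    unfolding body_def
    by (auto elim!: evIf evNull evVar evTrue simp: T0)
next
  case (Cons a xs)
  from Cons.prems have pr: "eval P [VL (a # xs)] (EIf (ENull (Var 0)) ETrue
     (EIf (ECall 0 [ETail (Var 0)]) (ECall 0 [ETail (Var 0)]) EFalse)) v n"
    unfolding body_def .
  have nul: "b = False \<and> m = 2" if "eval P [VL (a # xs)] (ENull (Var 0)) (VB b) m" for b m
    using that by (auto elim!: evNull evVar)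
  from pr show ?case
  proof (rule evIf)
    fix n0 n1
    assume "eval P [VL (a # xs)] (ENull (Var 0)) (VB True) n0"
    then show ?thesis using nul by blast
  next
    fix n0 n2
    assume nn: "n = Suc (n0 + n2)"
      and e0: "eval P [VL (a # xs)] (ENull (Var 0)) (VB False) n0"
      and h3: "eval P [VL (a # xs)] (EIf (ECall 0 [ETail (Var 0)]) (ECall 0 [ETail (Var 0)]) EFalse) v n2"
    from e0 nul have n0: "n0 = 2" by blast
    from h3 show "v = VB True \<and> n = T (length (a # xs))"
    proof (rule evIf)
      fix m0 m1
      assume nn2: "n2 = Suc (m0 + m1)"
        and c1: "eval P [VL (a # xs)] (ECall 0 [ETail (Var 0)]) (VB True) m0"
        and c2: "eval P [VL (a # xs)] (ECall 0 [ETail (Var 0)]) v m1"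
      from call_inv[OF c1] Cons.IH have "m0 = 3 + T (length xs)" by fastforce
      moreover from call_inv[OF c2] Cons.IH have "m1 = 3 + T (length xs)" "v = VB True" by fastforce+
      ultimately show ?thesis using nn n0 nn2 by (simp add: TS)
    next
      fix m0 m2
      assume c1: "eval P [VL (a # xs)] (ECall 0 [ETail (Var 0)]) (VB False) m0"
      from call_inv[OF c1] Cons.IH show ?thesis by fastforce
    qed
  qed
qed

lemma exist: "eval P [VL x] body (VB True) (T (length x))"
proof (induction x)
  case Nil
  have "eval P [VL []] (EIf (ENull (Var 0)) ETrue
     (EIf (ECall 0 [ETail (Var 0)]) (ECall 0 [ETail (Var 0)]) EFalse)) (VB True) (Suc (2 + 1))"
  proof (rule eval_evals.ev_if_true)
    have v: "eval P [VL []] (Var 0) (VL []) 1"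
      using eval_evals.ev_var[of 0 "[VL []]" P] by simp
    show "eval P [VL []] (ENull (Var 0)) (VB True) 2"
      using eval_evals.ev_null[OF v] by (simp add: numeral_2_eq_2)
    show "eval P [VL []] ETrue (VB True) 1" by (rule eval_evals.ev_true)
  qed
  then show ?case by (simp add: body_def T0)
next
  case (Cons a xs)
  have v: "eval P [VL (a # xs)] (Var 0) (VL (a # xs)) 1"
    using eval_evals.ev_var[of 0 "[VL (a#xs)]" P] by simp
  have tl: "eval P [VL (a # xs)] (ETail (Var 0)) (VL xs) 2"
    using eval_evals.ev_tail[OF v] by (simp add: numeral_2_eq_2)
  have es: "evals P [VL (a # xs)] [ETail (Var 0)] [VL xs] 2"
    using eval_evals.evs_cons[OF tl eval_evals.evs_nil] by simp
  have c: "eval P [VL (a # xs)] (ECall 0 [ETail (Var 0)]) (VB True) (3 + T (length xs))"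
    using eval_evals.ev_call[of 0 P "[ETail (Var 0)]", OF _ _ es, of "VB True" "T (length xs)"] Cons
    by (simp add: P_def numeral_3_eq_3)
  have i2: "eval P [VL (a # xs)] (EIf (ECall 0 [ETail (Var 0)]) (ECall 0 [ETail (Var 0)]) EFalse) (VB True)
     (Suc ((3 + T (length xs)) + (3 + T (length xs))))"
    by (rule eval_evals.ev_if_true[OF c c])
  have nl: "eval P [VL (a # xs)] (ENull (Var 0)) (VB False) 2"
    using eval_evals.ev_null[OF v] by (simp add: numeral_2_eq_2)
  have "eval P [VL (a # xs)] body (VB True) (Suc (2 + Suc ((3 + T (length xs)) + (3 + T (length xs)))))"
    unfolding body_def by (rule eval_evals.ev_if_false[OF nl i2])
  then show ?case by (simp add: TS)
qed

lemma timeP: "time P x = T (length x)"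
proof -
  have b: "snd (P ! 0) = body" by (simp add: P_def)
  show ?thesis unfolding time_def b
    by (rule the_equality) (use exist det in auto)
qed

lemma big: "\<exists>n. d * (real n + 1) ^ k < 14 * 2 ^ n - 10"
proof -
  have "\<forall>\<^sub>F n in sequentially. (d::real) * (real n + 1) ^ k < 14 * 2 ^ n - 10"
    by real_asymp
  then show ?thesis using eventually_sequentially by auto
qed

theorem theorem4:
  shows "\<exists>p. wf_prog p \<and> (\<forall>x. terminates p x) \<and>
           (\<exists>c::real. c > 1 \<and> (\<forall>x. c ^ length x \<le> real (time p x))) \<and>
           (\<forall>k::nat. \<forall>d::real. \<exists>x. real (time p x) > d * (real (length x) + 1) ^ k)"
proof (intro exI[of _ P] conjI allI)
  show "wf_prog P" by (simp add: wf_prog_def P_def body_def)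
  show "terminates P x" for x unfolding terminates_def using exist by (auto simp: P_def)
  have Tr: "real (T n) = 14 * 2 ^ n - 10" for n
  proof -
    have "(2::nat) ^ n \<ge> 1" by simp
    then have "(14::nat) * 2 ^ n \<ge> 10" by linarith
    then show ?thesis unfolding T_def by (simp add: of_nat_diff)
  qed
  show "\<exists>c::real. c > 1 \<and> (\<forall>x. c ^ length x \<le> real (time P x))"
  proof (intro exI[of _ 2] conjI allI)
    fix x :: "bool list"
    have "(1::real) \<le> 2 ^ length x" by simp
    then show "(2::real) ^ length x \<le> real (time P x)" unfolding timeP Tr by linarith
  qed simp
  fix k :: nat and d :: real
  obtain n where "d * (real n + 1) ^ k < 14 * 2 ^ n - 10" using big by blast
  then show "\<exists>x. real (time P x) > d * (real (length x) + 1) ^ k"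
    by (intro exI[of _ "replicate n True"]) (simp add: timeP Tr)
qed

end
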